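(* Let $S$ and $Z$ be finite nonempty alphabets with $\#Z\le \#S$, let $\tau:S\to Z$ be surjective, and let $(\Sigma,\sigma_\tau)$ be the associated full zip shift space. Then the set of periodic points of $\sigma_\tau$ (points $p\in\Sigma$ with $\sigma_\tau^n(p)=p$ for some $n\ge 1$) is dense in $\Sigma$.
   Context: The zip shift space is $\Sigma=\Sigma_{Z,S}$, the set of bi-infinite sequences $x=(x_i)_{i\in\mathbb{Z}}$ with $x_i\in S$ for all $i\ge 0$ and $x_i\in Z$ for all $i<0$. It carries the metric $d(x,y)=2^{-M(x,y)}$, where $M(x,y)=\min\{|i| : x_i\neq y_i\}$ (and $d(x,x)=0$); cylinder sets $[s_i\cdots s_{i+\ell}]=\{x\in\Sigma: x_j=s_j,\ i\le j\le i+\ell\}$ form a basis of the topology. The (full) zip shift map $\sigma_\tau:\Sigma\to\Sigma$ is defined by $(\sigma_\tau x)_i=x_{i+1}$ for all $i\neq -1$ and $(\sigma_\tau x)_{-1}=\tau(x_0)$; i.e. $\sigma_\tau(\cdots x_{-2}x_{-1}.x_0x_1x_2\cdots)=(\cdots x_{-2}x_{-1}\tau(x_0).x_1x_2\cdots)$. *)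

theory Defs
  imports "HOL-Analysis.Analysis"
begin

definition zip_space :: "'a set \<Rightarrow> 'a set \<Rightarrow> (int \<Rightarrow> 'a) set" where
  "zip_space Z S = {x. (\<forall>i\<ge>0. x i \<in> S) \<and> (\<forall>i<0. x i \<in> Z)}"

definition zip_M :: "(int \<Rightarrow> 'a) \<Rightarrow> (int \<Rightarrow> 'a) \<Rightarrow> nat" where
  "zip_M x y = (LEAST n. \<exists>i. nat \<bar>i\<bar> = n \<and> x i \<noteq> y i)"

definition zip_dist :: "(int \<Rightarrow> 'a) \<Rightarrow> (int \<Rightarrow> 'a) \<Rightarrow> real" where
  "zip_dist x y = (if x = y then 0 else 2 powr (- real (zip_M x y)))"

definition zip_shift :: "('a \<Rightarrow> 'a) \<Rightarrow> (int \<Rightarrow> 'a) \<Rightarrow> (int \<Rightarrow> 'a)" where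
  "zip_shift \<tau> x = (\<lambda>i. if i = -1 then \<tau> (x 0) else x (i + 1))"

definition zip_periodic_points :: "'a set \<Rightarrow> 'a set \<Rightarrow> ('a \<Rightarrow> 'a) \<Rightarrow> (int \<Rightarrow> 'a) set" where
  "zip_periodic_points Z S \<tau> =
     {p \<in> zip_space Z S. \<exists>n::nat. n \<ge> 1 \<and> (zip_shift \<tau> ^^ n) p = p}"

definition zip_dense :: "'a set \<Rightarrow> 'a set \<Rightarrow> (int \<Rightarrow> 'a) set \<Rightarrow> bool" where
  "zip_dense Z S A \<longleftrightarrow> A \<subseteq> zip_space Z S \<and>
     (\<forall>x\<in>zip_space Z S. \<forall>e>0. \<exists>p\<in>A. zip_dist x p < e)"

end

theory Submission
  imports Defs
begin

lemma zip_shift_pow: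
  "(zip_shift \<tau> ^^ k) x i =
     (if i \<ge> 0 then x (i + int k) else if i \<ge> - int k then \<tau> (x (i + int k)) else x (i + int k))"
proof (induction k arbitrary: i)
  case 0
  then show ?case by simp
next
  case (Suc k)
  show ?case
    using Suc[of 0] Suc[of "i+1"]
    by (auto simp: zip_shift_def algebra_simps)
qed

theorem theorem1:
  fixes S Z :: "'a set" and \<tau> :: "'a \<Rightarrow> 'a"
  assumes "finite S" and "S \<noteq> {}" and "finite Z" and "Z \<noteq> {}"
    and "card Z \<le> card S"
    and "\<tau> ` S = Z"
  shows "zip_dense Z S (zip_periodic_points Z S \<tau>)"
  unfolding zip_dense_def
proof (intro conjI ballI allI impI)
  show "zip_periodic_points Z S \<tau> \<subseteq> zip_space Z S"
    unfolding zip_periodic_points_def by auto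
next
  fix x e
  assume x: "x \<in> zip_space Z S" and e: "(0::real) < e"
  obtain N :: nat where N: "(1/2::real) ^ N < e"
    using real_arch_pow_inv[OF e] by fastforce
  define n :: nat where "n = 2 * N + 2"
  define g where "g = (\<lambda>z. SOME s. s \<in> S \<and> \<tau> s = z)"
  have g: "z \<in> Z \<Longrightarrow> g z \<in> S \<and> \<tau> (g z) = z" for z
    unfolding g_def using assms(6) by (rule_tac someI_ex) blast
  define q where "q = (\<lambda>j::int. if j \<le> int N then x j else g (x (j - int n)))"
  define p where "p = (\<lambda>i::int. if i \<ge> 0 then q (i mod int n) else \<tau> (q (i mod int n)))"
  have npos: "int n > 0" unfolding n_def by simp
  have qS: "q (i mod int n) \<in> S" for i
  proof -
    have r: "0 \<le> i mod int n" "i mod int n < int n" using npos by auto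
    show ?thesis
    proof (cases "i mod int n \<le> int N")
      case True
      then show ?thesis using x r unfolding q_def zip_space_def by auto
    next
      case False
      then have "x (i mod int n - int n) \<in> Z" using x r unfolding zip_space_def by auto
      then show ?thesis using False g unfolding q_def by auto
    qed
  qed
  have pspace: "p \<in> zip_space Z S"
    unfolding zip_space_def p_def using qS assms(6) by auto
  have per: "(zip_shift \<tau> ^^ n) p = p"
  proof
    fix i
    have m: "(i + int n) mod int n = i mod int n" by simp
    show "(zip_shift \<tau> ^^ n) p i = p i"
      unfolding zip_shift_pow by (auto simp: p_def m)
  qed
  have pP: "p \<in> zip_periodic_points Z S \<tau>"
    unfolding zip_periodic_points_def using pspace per n_def
    by (intro CollectI conjI exI[of _ n]) auto
  have agree: "x i = p i" if "nat \<bar>i\<bar> \<le> N" for i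
  proof (cases "i \<ge> 0")
    case True
    then have "i mod int n = i" using that unfolding n_def by (intro mod_pos_pos_trivial) auto
    then show ?thesis using True that unfolding p_def q_def by auto
  next
    case False
    have im0: "i mod int n = (i + int n) mod int n" by simp
    have im1: "(i + int n) mod int n = i + int n" using that False unfolding n_def
      by (intro mod_pos_pos_trivial) auto
    have im: "i mod int n = i + int n" using im0 im1 by (rule trans)
    have "x i \<in> Z" using x False unfolding zip_space_def by auto
    moreover have "\<not> i + int n \<le> int N" using that False unfolding n_def by auto
    ultimately show ?thesis using False g unfolding p_def q_def im by auto
  qed
  have "zip_dist x p < e"
  proof (cases "x = p")
    case True
    then show ?thesis using e by (simp add: zip_dist_def)
  next
    case False
    then obtain i where "x i \<noteq> p i" by auto
    then have ex: "\<exists>m i. nat \<bar>i\<bar> = m \<and> x i \<noteq> p i" by blast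
    obtain j where j: "nat \<bar>j\<bar> = zip_M x p" "x j \<noteq> p j"
      using LeastI_ex[OF ex] unfolding zip_M_def by blast
    have MN: "zip_M x p \<ge> N" using agree j by force
    have "zip_dist x p = (1/2::real) ^ zip_M x p"
      using False by (simp add: zip_dist_def powr_minus powr_realpow power_one_over inverse_eq_divide)
    also have "\<dots> \<le> (1/2) ^ N" using MN by (rule power_decreasing) auto
    finally show ?thesis using N by linarith
  qed
  then show "\<exists>p\<in>zip_periodic_points Z S \<tau>. zip_dist x p < e" using pP by blast
qed

end
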